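(* Let $k\ge2$ be an integer. For each $t>0$, $\frac1n a_n(\delta_nt)-\mu_n(\delta_nt)\to0$ in $L^1$ as $n\to\infty$.
   Context: $\xi$ is an offspring law on $\{0,1,\dots\}$ with mean 1 and $0<\sigma^2:=\sum_{p\ge2}p(p-1)\xi(p)<\infty$; $T_n$ is a Galton--Watson tree with law $\xi$ conditioned to have $n$ vertices. Each vertex $v$ carries an independent rate-1 Poisson process $N_v$ and is removed at time $\eta_v=\inf\{t:N_v(t)=k\}$. $T_n(t)$ is the set of vertices $v$ such that neither $v$ nor any ancestor of $v$ has been removed by time $t$; $\mu_n(t)=\#T_n(t)/n$; $a_n(t)=\#\{v\in T_n(t):N_v(t)=0\}$; $\delta_n=\sigma^{1/k}n^{-1/(2k)}$. *)

theory Defs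
  imports "HOL-Probability.Probability" "HOL-Library.Sublist"
begin

datatype ptree = Node "ptree list"

fun children :: "ptree \<Rightarrow> ptree list" where
  "children (Node ts) = ts"

fun tsize :: "ptree \<Rightarrow> nat" where
  "tsize (Node ts) = 1 + sum_list (map tsize ts)"

text \<open>Vertices are addressed by Ulam--Harris words (paths from the root);
  the ancestors of a vertex v (including v) are exactly the prefixes of v.\<close>
fun verts :: "ptree \<Rightarrow> nat list set"
  and verts_from :: "nat \<Rightarrow> ptree list \<Rightarrow> nat list set" where
  "verts (Node ts) = insert [] (verts_from 0 ts)"
| "verts_from i [] = {}"
| "verts_from i (t # ts) = (\<lambda>w. i # w) ` verts t \<union> verts_from (Suc i) ts"

text \<open>Galton--Watson weight of a plane tree: product over vertices of xi(outdegree).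
  This is the probability that an (unconditioned) GW tree equals the given tree.\<close>
fun gw_weight :: "nat pmf \<Rightarrow> ptree \<Rightarrow> real" where
  "gw_weight \<xi> (Node ts) = pmf \<xi> (length ts) * prod_list (map (gw_weight \<xi>) ts)"

definition gw_size_prob :: "nat pmf \<Rightarrow> nat \<Rightarrow> real" where
  "gw_size_prob \<xi> n = (\<Sum>\<tau>\<in>{\<tau>. tsize \<tau> = n}. gw_weight \<xi> \<tau>)"

text \<open>Law of the GW tree conditioned to have n vertices (meaningful when gw_size_prob > 0).\<close>
definition cgw :: "nat pmf \<Rightarrow> nat \<Rightarrow> ptree pmf" where
  "cgw \<xi> n = embed_pmf (\<lambda>\<tau>. if tsize \<tau> = n then gw_weight \<xi> \<tau> / gw_size_prob \<xi> n else 0)"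

text \<open>Surviving vertices T(s), given the values N v = N_v(s) of the Poisson processes at time s:
  v is removed by time s iff eta_v \<le> s iff N_v(s) \<ge> k.\<close>
definition alive :: "nat \<Rightarrow> ptree \<Rightarrow> (nat list \<Rightarrow> nat) \<Rightarrow> nat list set" where
  "alive k \<tau> N = {v \<in> verts \<tau>. \<forall>u. prefix u v \<longrightarrow> N u < k}"

definition mu_frac :: "nat \<Rightarrow> nat \<Rightarrow> ptree \<Rightarrow> (nat list \<Rightarrow> nat) \<Rightarrow> real" where
  "mu_frac k n \<tau> N = real (card (alive k \<tau> N)) / real n"

definition a_count :: "nat \<Rightarrow> ptree \<Rightarrow> (nat list \<Rightarrow> nat) \<Rightarrow> nat" where
  "a_count k \<tau> N = card {v \<in> alive k \<tau> N. N v = 0}"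

definition sigma2 :: "nat pmf \<Rightarrow> real" where
  "sigma2 \<xi> = (\<Sum>p. real p * (real p - 1) * pmf \<xi> p)"

definition delta :: "nat pmf \<Rightarrow> nat \<Rightarrow> nat \<Rightarrow> real" where
  "delta \<xi> k n = sqrt (sigma2 \<xi>) powr (1 / real k) * real n powr (- 1 / (2 * real k))"

definition tree_marks :: "nat pmf \<Rightarrow> nat \<Rightarrow> real \<Rightarrow> (ptree \<times> (nat list \<Rightarrow> nat)) pmf" where
  "tree_marks \<xi> n s = do { \<tau> \<leftarrow> cgw \<xi> n; N \<leftarrow> Pi_pmf (verts \<tau>) 0 (\<lambda>_. poisson_pmf s); return_pmf (\<tau>, N) }"

definition L1_err :: "nat pmf \<Rightarrow> nat \<Rightarrow> real \<Rightarrow> nat \<Rightarrow> real" where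
  "L1_err \<xi> k t n = measure_pmf.expectation (tree_marks \<xi> n (delta \<xi> k n * t))
      (\<lambda>(\<tau>, N). \<bar>real (a_count k \<tau> N) / real n - mu_frac k n \<tau> N\<bar>)"

end

theory Submission
  imports Defs
begin
lemma verts_fin_card:
  "finite (verts \<tau>) \<and> card (verts \<tau>) \<le> tsize \<tau>"
  "finite (verts_from i ts) \<and> card (verts_from i ts) \<le> sum_list (map tsize ts)"
proof (induction \<tau> and i ts rule: verts_verts_from.induct)
  case (1 ts)
  then show ?case by (auto intro: order.trans[OF card_insert_le_m1] simp: card_insert_if)
next
  case (2 i)
  then show ?case by simp
next
  case (3 i t ts)
  have "card ((#) i ` verts t \<union> verts_from (Suc i) ts) \<le> card ((#) i ` verts t) + card (verts_from (Suc i) ts)"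
    by (rule card_Un_le)
  also have "\<dots> \<le> card (verts t) + card (verts_from (Suc i) ts)"
    using card_image_le[of "verts t" "(#) i"] 3 by simp
  finally show ?case using 3 by simp
qed

lemma gw_weight_nonneg: "0 \<le> gw_weight \<xi> \<tau>"
  by (induction \<tau>) (auto intro!: mult_nonneg_nonneg prod_list_nonneg)

lemma tsize_pos: "1 \<le> tsize \<tau>"
  by (cases \<tau>) simp

lemma set_cgw:
  assumes "0 < gw_size_prob \<xi> n"
  shows "finite {\<tau>. tsize \<tau> = n}" "set_pmf (cgw \<xi> n) \<subseteq> {\<tau>. tsize \<tau> = n}"
proof -
  let ?A = "{\<tau>. tsize \<tau> = n}"
  show fin: "finite ?A"
    using assms unfolding gw_size_prob_def by (metis less_irrefl sum.infinite)
  define f where "f = (\<lambda>\<tau>. if tsize \<tau> = n then gw_weight \<xi> \<tau> / gw_size_prob \<xi> n else 0)"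
  have nn: "\<And>x. 0 \<le> f x" using assms gw_weight_nonneg unfolding f_def by auto
  have "(\<integral>\<^sup>+x. ennreal (f x) \<partial>count_space UNIV) = (\<integral>\<^sup>+x. ennreal (f x) * indicator ?A x \<partial>count_space UNIV)"
    by (intro nn_integral_cong) (auto simp: f_def indicator_def)
  also have "\<dots> = (\<integral>\<^sup>+x. ennreal (f x) \<partial>count_space ?A)"
    by (simp add: nn_integral_count_space_indicator)
  also have "\<dots> = (\<Sum>x\<in>?A. ennreal (f x))"
    using fin by (simp add: nn_integral_count_space_finite)
  also have "\<dots> = ennreal (\<Sum>x\<in>?A. f x)"
    using nn by (simp add: sum_ennreal)
  also have "(\<Sum>x\<in>?A. f x) = (\<Sum>x\<in>?A. gw_weight \<xi> x) / gw_size_prob \<xi> n"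
    by (simp add: f_def sum_divide_distrib)
  also have "\<dots> = 1" using assms unfolding gw_size_prob_def by simp
  finally have "(\<integral>\<^sup>+x. ennreal (f x) \<partial>count_space UNIV) = 1" by simp
  then have "set_pmf (embed_pmf f) = {x. f x \<noteq> 0}" using nn by (simp add: set_embed_pmf)
  then show "set_pmf (cgw \<xi> n) \<subseteq> ?A" unfolding cgw_def f_def[symmetric] by (auto simp: f_def)
qed

lemma exp_bind_bounded:
  fixes h :: "_ \<Rightarrow> real"
  assumes "\<And>x. x \<in> set_pmf (bind_pmf p f) \<Longrightarrow> 0 \<le> h x \<and> h x \<le> B"
  shows "measure_pmf.expectation (bind_pmf p f) h = measure_pmf.expectation p (\<lambda>x. measure_pmf.expectation (f x) h)"
proof -
  have B: "0 \<le> B" using assms set_pmf_not_empty by (metis all_not_in_conv order.trans)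
  have inner: "0 \<le> h y \<and> h y \<le> B" if "x \<in> set_pmf p" "y \<in> set_pmf (f x)" for x y
    using assms that by auto
  have ie: "integrable (measure_pmf (f x)) h" "AE y in measure_pmf (f x). 0 \<le> h y" if "x \<in> set_pmf p" for x
    using inner[OF that] by (auto intro!: measure_pmf.integrable_const_bound[where B=B] simp: AE_measure_pmf_iff)
  have ev: "0 \<le> measure_pmf.expectation (f x) h \<and> measure_pmf.expectation (f x) h \<le> B" if "x \<in> set_pmf p" for x
  proof
    show "0 \<le> measure_pmf.expectation (f x) h" using inner[OF that] by (intro integral_nonneg_AE) (auto simp: AE_measure_pmf_iff)
    have "measure_pmf.expectation (f x) h \<le> measure_pmf.expectation (f x) (\<lambda>_. B)"
      using inner[OF that] ie[OF that] by (intro integral_mono_AE) (auto simp: AE_measure_pmf_iff)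
    then show "measure_pmf.expectation (f x) h \<le> B" by simp
  qed
  have i1: "integrable (measure_pmf (bind_pmf p f)) h"
    using assms B by (auto intro!: measure_pmf.integrable_const_bound[where B=B] simp: AE_measure_pmf_iff)
  have i2: "integrable (measure_pmf p) (\<lambda>x. measure_pmf.expectation (f x) h)"
    using ev B by (auto intro!: measure_pmf.integrable_const_bound[where B=B] simp: AE_measure_pmf_iff)
  have "ennreal (measure_pmf.expectation (bind_pmf p f) h) = (\<integral>\<^sup>+x. ennreal (h x) \<partial>bind_pmf p f)"
    using i1 assms by (subst nn_integral_eq_integral) (auto simp: AE_measure_pmf_iff)
  also have "\<dots> = (\<integral>\<^sup>+x. \<integral>\<^sup>+y. ennreal (h y) \<partial>f x \<partial>p)" by simp
  also have "\<dots> = (\<integral>\<^sup>+x. ennreal (measure_pmf.expectation (f x) h) \<partial>p)"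
    using ie by (intro nn_integral_cong_AE) (auto simp: AE_measure_pmf_iff nn_integral_eq_integral)
  also have "\<dots> = ennreal (measure_pmf.expectation p (\<lambda>x. measure_pmf.expectation (f x) h))"
    using i2 ev by (subst nn_integral_eq_integral) (auto simp: AE_measure_pmf_iff)
  finally show ?thesis
    using ev i1 assms by (subst (asm) ennreal_inj) (auto intro!: integral_nonneg_AE simp: AE_measure_pmf_iff)
qed

lemma poisson_nonzero:
  assumes "0 < s"
  shows "measure_pmf.expectation (poisson_pmf s) (\<lambda>x. if x = 0 then 0 else 1 :: real) = 1 - exp (- s)"
proof -
  have e1: "(\<lambda>x::nat. if x = 0 then 0 else 1 :: real) = (\<lambda>x. 1 - indicator {0::nat} x)"
    by (auto simp: indicator_def)
  have ii: "integrable (measure_pmf (poisson_pmf s)) (indicator {0} :: nat \<Rightarrow> real)"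
    by (rule measure_pmf.integrable_const_bound[where B=1]) (auto simp: AE_measure_pmf_iff split: split_indicator)
  have e2: "measure_pmf.expectation (poisson_pmf s) (\<lambda>x::nat. 1 - indicator {0::nat} x :: real) =
      measure_pmf.expectation (poisson_pmf s) (\<lambda>x. 1) - measure_pmf.expectation (poisson_pmf s) (indicator {0::nat} :: nat \<Rightarrow> real)"
    using ii by (intro Bochner_Integration.integral_diff) simp_all
  have e3: "measure_pmf.expectation (poisson_pmf s) (indicator {0} :: nat \<Rightarrow> real) = exp (- s)"
    using assms by (simp add: measure_pmf_single)
  show ?thesis unfolding e1 e2 e3 by simp
qed

lemma inner_bound:
  assumes "tsize \<tau> = n" "0 < n" "0 < s"
  shows "measure_pmf.expectation (Pi_pmf (verts \<tau>) 0 (\<lambda>_. poisson_pmf s))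
     (\<lambda>N. \<bar>real (a_count k \<tau> N) / real n - mu_frac k n \<tau> N\<bar>) \<le> 1 - exp (- s)"
proof -
  let ?V = "verts \<tau>"
  let ?P = "Pi_pmf (verts \<tau>) 0 (\<lambda>_. poisson_pmf s)"
  define ind where "ind = (\<lambda>v N. if (N :: nat list \<Rightarrow> nat) v \<noteq> 0 then 1 else 0 :: real)"
  have fin: "finite ?V" and cV: "card ?V \<le> n" using verts_fin_card(1)[of \<tau>] assms by auto
  have pw: "\<bar>real (a_count k \<tau> N) / real n - mu_frac k n \<tau> N\<bar> \<le> (\<Sum>v\<in>?V. ind v N) / real n" for N
  proof -
    let ?A = "alive k \<tau> N"
    have Asub: "?A \<subseteq> ?V" unfolding alive_def by auto
    have finA: "finite ?A" using fin Asub finite_subset by blast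
    have split: "?A = {v \<in> ?A. N v = 0} \<union> {v \<in> ?A. N v \<noteq> 0}" by auto
    have cA: "card ?A = card {v \<in> ?A. N v = 0} + card {v \<in> ?A. N v \<noteq> 0}"
      using finA by (subst split) (rule card_Un_disjoint, auto)
    have "card {v \<in> ?A. N v \<noteq> 0} \<le> card {v \<in> ?V. N v \<noteq> 0}"
      using fin Asub by (intro card_mono) auto
    also have "real (card {v \<in> ?V. N v \<noteq> 0}) = (\<Sum>v\<in>{v \<in> ?V. N v \<noteq> 0}. 1)"
      by simp
    also have "\<dots> = (\<Sum>v\<in>?V. ind v N)"
      by (subst sum.inter_filter[OF fin]) (simp add: ind_def)
    finally have le: "real (card {v \<in> ?A. N v \<noteq> 0}) \<le> (\<Sum>v\<in>?V. ind v N)" by simp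
    have "real (a_count k \<tau> N) / real n - mu_frac k n \<tau> N = - (real (card {v \<in> ?A. N v \<noteq> 0}) / real n)"
      unfolding a_count_def mu_frac_def using cA by (simp add: add_divide_distrib)
    then show ?thesis using le assms(2) by (simp add: divide_right_mono)
  qed
  have intI: "integrable ?P (ind v)" for v
    by (auto intro!: measure_pmf.integrable_const_bound[where B=1] simp: AE_measure_pmf_iff ind_def)
  have ev: "measure_pmf.expectation ?P (ind v) = 1 - exp (- s)" if "v \<in> ?V" for v
  proof -
    have "measure_pmf.expectation ?P (ind v) =
        measure_pmf.expectation ?P (\<lambda>N. (\<lambda>x::nat. if x = 0 then 0 else 1 :: real) (N v))"
      unfolding ind_def by (intro Bochner_Integration.integral_cong) auto
    also have "\<dots> = measure_pmf.expectation (map_pmf (\<lambda>N. N v) ?P) (\<lambda>x::nat. if x = 0 then 0 else 1 :: real)"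
      by (simp only: integral_map_pmf)
    also have "map_pmf (\<lambda>N. N v) ?P = poisson_pmf s" using Pi_pmf_component[OF fin, of v 0] that by simp
    finally show ?thesis using poisson_nonzero[OF assms(3)] by simp
  qed
  have "measure_pmf.expectation ?P (\<lambda>N. \<bar>real (a_count k \<tau> N) / real n - mu_frac k n \<tau> N\<bar>)
      \<le> measure_pmf.expectation ?P (\<lambda>N. (\<Sum>v\<in>?V. ind v N) / real n)"
  proof (rule integral_mono[OF _ _ pw])
    show "integrable ?P (\<lambda>N. (\<Sum>v\<in>?V. ind v N) / real n)"
      using intI by auto
    show "integrable ?P (\<lambda>N. \<bar>real (a_count k \<tau> N) / real n - mu_frac k n \<tau> N\<bar>)"
    proof (rule Bochner_Integration.integrable_bound)
      show "integrable ?P (\<lambda>N. (\<Sum>v\<in>?V. ind v N) / real n)" using intI by auto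
      show "AE N in ?P. norm (\<bar>real (a_count k \<tau> N) / real n - mu_frac k n \<tau> N\<bar>) \<le> norm ((\<Sum>v\<in>?V. ind v N) / real n)"
      proof -
        have "0 \<le> (\<Sum>v\<in>?V. ind v N)" for N by (auto simp: ind_def intro!: sum_nonneg)
        then show ?thesis using pw by (auto simp: AE_measure_pmf_iff)
      qed
    qed auto
  qed
  also have "\<dots> = (\<Sum>v\<in>?V. measure_pmf.expectation ?P (ind v)) / real n"
    using intI by (simp add: Bochner_Integration.integral_sum)
  also have "\<dots> = real (card ?V) * (1 - exp (- s)) / real n"
    using ev by simp
  also have "\<dots> \<le> 1 - exp (- s)"
  proof -
    have "0 \<le> 1 - exp (- s)" using assms(3) by simp
    then have "real (card ?V) * (1 - exp (- s)) \<le> real n * (1 - exp (- s))"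
      using cV by (intro mult_right_mono) auto
    then show ?thesis using assms(2) by (simp add: divide_le_eq mult.commute)
  qed
  finally show ?thesis .
qed

lemma g_bound:
  assumes "tsize \<tau> = n" "0 < n"
  shows "0 \<le> \<bar>real (a_count k \<tau> N) / real n - mu_frac k n \<tau> N\<bar> \<and> \<bar>real (a_count k \<tau> N) / real n - mu_frac k n \<tau> N\<bar> \<le> 1"
proof -
  have fin: "finite (verts \<tau>)" and cV: "card (verts \<tau>) \<le> n" using verts_fin_card(1)[of \<tau>] assms by auto
  have Asub: "alive k \<tau> N \<subseteq> verts \<tau>" unfolding alive_def by auto
  have finA: "finite (alive k \<tau> N)" using fin Asub finite_subset by blast
  have c1: "a_count k \<tau> N \<le> card (alive k \<tau> N)" unfolding a_count_def using finA by (intro card_mono) auto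
  have c2: "card (alive k \<tau> N) \<le> n" using card_mono[OF fin Asub] cV by simp
  have "\<bar>real (a_count k \<tau> N) / real n - mu_frac k n \<tau> N\<bar> = (real (card (alive k \<tau> N)) - real (a_count k \<tau> N)) / real n"
  proof -
    have r: "real (a_count k \<tau> N) \<le> real (card (alive k \<tau> N))" using c1 by simp
    have "real (a_count k \<tau> N) / real n - mu_frac k n \<tau> N = - ((real (card (alive k \<tau> N)) - real (a_count k \<tau> N)) / real n)"
      unfolding mu_frac_def by (simp add: diff_divide_distrib)
    moreover have "0 \<le> (real (card (alive k \<tau> N)) - real (a_count k \<tau> N)) / real n" using r by simp
    ultimately show ?thesis by (metis abs_minus_cancel abs_of_nonneg)
  qed
  also have "\<dots> \<le> 1" using c1 c2 assms(2) by (simp add: divide_le_eq)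
  finally show ?thesis by simp
qed

theorem lemma7:
  fixes \<xi> :: "nat pmf" and k :: nat and t :: real
  assumes "k \<ge> 2"
    and "(\<lambda>p. real p * pmf \<xi> p) sums 1"
    and "summable (\<lambda>p. real p * (real p - 1) * pmf \<xi> p)"
    and "0 < sigma2 \<xi>"
    and "0 < t"
  shows "filterlim (L1_err \<xi> k t) (nhds 0)
           (sequentially \<sqinter> principal {n. 0 < gw_size_prob \<xi> n})"
proof -
  let ?F = "sequentially \<sqinter> principal {n. 0 < gw_size_prob \<xi> n}"
  let ?g = "\<lambda>(\<tau>, N). \<bar>real (a_count k \<tau> N) / real n - mu_frac k n \<tau> N\<bar>"
  have bound: "0 \<le> L1_err \<xi> k t n \<and> L1_err \<xi> k t n \<le> delta \<xi> k n * t" if pos: "0 < gw_size_prob \<xi> n" for n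
  proof -
    let ?s = "delta \<xi> k n * t"
    let ?A = "{\<tau>. tsize \<tau> = n}"
    have finA: "finite ?A" and supp: "set_pmf (cgw \<xi> n) \<subseteq> ?A" using set_cgw[OF pos] by auto
    have n0: "0 < n"
    proof (rule ccontr)
      assume "\<not> 0 < n"
      moreover have "\<forall>\<tau>. tsize \<tau> \<noteq> 0" using tsize_pos by (metis not_one_le_zero)
      ultimately have "?A = {}" by auto
      then show False using pos unfolding gw_size_prob_def by simp
    qed
    have s0: "0 < ?s" unfolding delta_def using assms(4,5) n0 by simp
    define G where "G = (\<lambda>\<tau>. measure_pmf.expectation (Pi_pmf (verts \<tau>) 0 (\<lambda>_. poisson_pmf ?s))
          (\<lambda>N. \<bar>real (a_count k \<tau> N) / real n - mu_frac k n \<tau> N\<bar>))"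
    have tm: "tree_marks \<xi> n ?s = bind_pmf (cgw \<xi> n) (\<lambda>\<tau>. bind_pmf (Pi_pmf (verts \<tau>) 0 (\<lambda>_. poisson_pmf ?s)) (\<lambda>N. return_pmf (\<tau>, N)))"
      unfolding tree_marks_def by simp
    have "L1_err \<xi> k t n = measure_pmf.expectation (cgw \<xi> n) (\<lambda>\<tau>. measure_pmf.expectation
        (bind_pmf (Pi_pmf (verts \<tau>) 0 (\<lambda>_. poisson_pmf ?s)) (\<lambda>N. return_pmf (\<tau>, N)))
        (\<lambda>(\<tau>, N). \<bar>real (a_count k \<tau> N) / real n - mu_frac k n \<tau> N\<bar>))"
      unfolding L1_err_def tm
    proof (rule exp_bind_bounded[where B=1])
      fix x assume "x \<in> set_pmf (cgw \<xi> n \<bind> (\<lambda>\<tau>. Pi_pmf (verts \<tau>) 0 (\<lambda>_. poisson_pmf ?s) \<bind> (\<lambda>N. return_pmf (\<tau>, N))))"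
      then obtain \<tau> N where x: "x = (\<tau>, N)" "\<tau> \<in> set_pmf (cgw \<xi> n)" by auto
      then have "tsize \<tau> = n" using supp by auto
      then show "0 \<le> (case x of (\<tau>, N) \<Rightarrow> \<bar>real (a_count k \<tau> N) / real n - mu_frac k n \<tau> N\<bar>) \<and>
          (case x of (\<tau>, N) \<Rightarrow> \<bar>real (a_count k \<tau> N) / real n - mu_frac k n \<tau> N\<bar>) \<le> 1"
        using g_bound[OF _ n0] x by simp
    qed
    also have "\<dots> = measure_pmf.expectation (cgw \<xi> n) G"
      unfolding G_def by (simp add: map_pmf_def[symmetric])
    finally have L: "L1_err \<xi> k t n = measure_pmf.expectation (cgw \<xi> n) G" .
    have Gb: "0 \<le> G \<tau> \<and> G \<tau> \<le> 1 - exp (- ?s)" if "\<tau> \<in> set_pmf (cgw \<xi> n)" for \<tau>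
    proof
      have ts: "tsize \<tau> = n" using that supp by auto
      show "G \<tau> \<le> 1 - exp (- ?s)" unfolding G_def by (rule inner_bound[OF ts n0 s0])
      show "0 \<le> G \<tau>" unfolding G_def using g_bound[OF ts n0] by (intro integral_nonneg_AE) auto
    qed
    have e1: "1 - exp (- ?s) \<le> ?s" using exp_ge_add_one_self[of "- ?s"] by simp
    have e0: "1 - exp (- ?s) \<le> 1" by simp
    have Gb1: "\<bar>G \<tau>\<bar> \<le> 1" if "\<tau> \<in> set_pmf (cgw \<xi> n)" for \<tau> using Gb[OF that] e0 by linarith
    have intG: "integrable (measure_pmf (cgw \<xi> n)) G"
      using Gb1 by (intro measure_pmf.integrable_const_bound[where B=1]) (auto simp: AE_measure_pmf_iff)
    have "measure_pmf.expectation (cgw \<xi> n) G \<le> 1 - exp (- ?s)"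
      using Gb intG by (intro measure_pmf.integral_le_const) (auto simp: AE_measure_pmf_iff)
    moreover have "0 \<le> measure_pmf.expectation (cgw \<xi> n) G"
      using Gb by (intro integral_nonneg_AE) (auto simp: AE_measure_pmf_iff)
    ultimately show ?thesis using L e1 by simp
  qed
  have lim: "((\<lambda>n. delta \<xi> k n * t) \<longlongrightarrow> 0) sequentially"
  proof -
    have neg: "- 1 / (2 * real k) < 0" using assms(1) by simp
    have "((\<lambda>n. sqrt (sigma2 \<xi>) powr (1 / real k) * real n powr (- 1 / (2 * real k)) * t) \<longlongrightarrow>
        sqrt (sigma2 \<xi>) powr (1 / real k) * 0 * t) sequentially"
      by (intro tendsto_intros tendsto_neg_powr[OF neg] filterlim_real_sequentially)
    then show ?thesis unfolding delta_def by simp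
  qed
  show ?thesis
  proof (rule tendsto_sandwich[of "\<lambda>_. 0" _ _ "\<lambda>n. delta \<xi> k n * t"])
    show "\<forall>\<^sub>F n in ?F. 0 \<le> L1_err \<xi> k t n" using bound
      by (auto simp: eventually_inf_principal)
    show "\<forall>\<^sub>F n in ?F. L1_err \<xi> k t n \<le> delta \<xi> k n * t" using bound
      by (auto simp: eventually_inf_principal)
    show "((\<lambda>n. delta \<xi> k n * t) \<longlongrightarrow> 0) ?F"
      by (rule tendsto_mono[OF inf_le1 lim])
  qed simp
qed

end
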